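(* Let $((\mathcal{S},\mathcal{T}),(\mathcal{U},\mathcal{V}))$ be a twin cotorsion pair on a triangulated category $\mathcal{C}$, and put $\mathcal{W}=\mathcal{U}\cap\mathcal{T}$, $\mathcal{C}^+=\mathcal{W}*\mathcal{V}[1]$, $\mathcal{C}^-=\mathcal{S}[-1]*\mathcal{W}$, $\mathcal{H}=\mathcal{C}^+\cap\mathcal{C}^-$. Then $\mathcal{H}\cap(\mathcal{U}*\mathcal{T})=\mathcal{W}$.
   Context: For full subcategories $\mathcal{X},\mathcal{Y}$, $\mathcal{X}*\mathcal{Y}$ is the full subcategory of objects $C$ admitting a distinguished triangle $X\to C\to Y\to X[1]$ with $X\in\mathcal{X}$, $Y\in\mathcal{Y}$. A cotorsion pair $(\mathcal{A},\mathcal{B})$: full subcategories closed under isomorphisms, finite direct sums and summands with $\mathcal{C}=\mathcal{A}*\mathcal{B}[1]$ and $\mathcal{C}(\mathcal{A},\mathcal{B}[1])=0$. A twin cotorsion pair $((\mathcal{S},\mathcal{T}),(\mathcal{U},\mathcal{V}))$ consists of two cotorsion pairs with $\mathcal{C}(\mathcal{S},\mathcal{V}[1])=0$. *)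

theory Defs
  imports Main
begin

text \<open>A (small) additive category with an automorphism (the shift [1], with inverse [-1])
and a class of distinguished triangles. Composition: cmp C g f means g after f.\<close>

record ('o, 'm) tricat =
  Obj   :: "'o set"
  Mor   :: "'m set"
  dom   :: "'m \<Rightarrow> 'o"
  cod   :: "'m \<Rightarrow> 'o"
  cmp   :: "'m \<Rightarrow> 'm \<Rightarrow> 'm"
  idm   :: "'o \<Rightarrow> 'm"
  madd  :: "'m \<Rightarrow> 'm \<Rightarrow> 'm"
  mzero :: "'o \<Rightarrow> 'o \<Rightarrow> 'm"
  mneg  :: "'m \<Rightarrow> 'm"
  shO   :: "'o \<Rightarrow> 'o"
  shM   :: "'m \<Rightarrow> 'm"
  ushO  :: "'o \<Rightarrow> 'o"
  ushM  :: "'m \<Rightarrow> 'm"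
  dist  :: "('o \<times> 'o \<times> 'o \<times> 'm \<times> 'm \<times> 'm) set"

definition hom :: "('o, 'm, 'x) tricat_scheme \<Rightarrow> 'o \<Rightarrow> 'o \<Rightarrow> 'm set" where
  "hom C X Y = {f \<in> Mor C. dom C f = X \<and> cod C f = Y}"

definition category :: "('o, 'm, 'x) tricat_scheme \<Rightarrow> bool" where
  "category C \<longleftrightarrow>
     (\<forall>f\<in>Mor C. dom C f \<in> Obj C \<and> cod C f \<in> Obj C) \<and>
     (\<forall>X\<in>Obj C. idm C X \<in> hom C X X) \<and>
     (\<forall>X Y Z f g. f \<in> hom C X Y \<longrightarrow> g \<in> hom C Y Z \<longrightarrow> cmp C g f \<in> hom C X Z) \<and>
     (\<forall>W X Y Z f g h. f \<in> hom C W X \<longrightarrow> g \<in> hom C X Y \<longrightarrow> h \<in> hom C Y Z \<longrightarrow>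
        cmp C h (cmp C g f) = cmp C (cmp C h g) f) \<and>
     (\<forall>X Y f. f \<in> hom C X Y \<longrightarrow> cmp C f (idm C X) = f \<and> cmp C (idm C Y) f = f)"

definition preadditive :: "('o, 'm, 'x) tricat_scheme \<Rightarrow> bool" where
  "preadditive C \<longleftrightarrow> category C \<and>
     (\<forall>X\<in>Obj C. \<forall>Y\<in>Obj C.
        mzero C X Y \<in> hom C X Y \<and>
        (\<forall>f\<in>hom C X Y. \<forall>g\<in>hom C X Y. madd C f g \<in> hom C X Y) \<and>
        (\<forall>f\<in>hom C X Y. mneg C f \<in> hom C X Y) \<and>
        (\<forall>f\<in>hom C X Y. \<forall>g\<in>hom C X Y. \<forall>h\<in>hom C X Y.
            madd C (madd C f g) h = madd C f (madd C g h)) \<and>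
        (\<forall>f\<in>hom C X Y. \<forall>g\<in>hom C X Y. madd C f g = madd C g f) \<and>
        (\<forall>f\<in>hom C X Y. madd C (mzero C X Y) f = f) \<and>
        (\<forall>f\<in>hom C X Y. madd C f (mneg C f) = mzero C X Y)) \<and>
     (\<forall>X Y Z f g g'. f \<in> hom C X Y \<longrightarrow> g \<in> hom C Y Z \<longrightarrow> g' \<in> hom C Y Z \<longrightarrow>
        cmp C (madd C g g') f = madd C (cmp C g f) (cmp C g' f)) \<and>
     (\<forall>X Y Z f f' g. f \<in> hom C X Y \<longrightarrow> f' \<in> hom C X Y \<longrightarrow> g \<in> hom C Y Z \<longrightarrow>
        cmp C g (madd C f f') = madd C (cmp C g f) (cmp C g f'))"

definition iso :: "('o, 'm, 'x) tricat_scheme \<Rightarrow> 'm \<Rightarrow> bool" where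
  "iso C f \<longleftrightarrow> f \<in> Mor C \<and> (\<exists>g\<in>hom C (cod C f) (dom C f).
      cmp C g f = idm C (dom C f) \<and> cmp C f g = idm C (cod C f))"

definition zero_obj :: "('o, 'm, 'x) tricat_scheme \<Rightarrow> 'o \<Rightarrow> bool" where
  "zero_obj C Z \<longleftrightarrow> Z \<in> Obj C \<and> idm C Z = mzero C Z Z"

definition biprod :: "('o, 'm, 'x) tricat_scheme \<Rightarrow> 'o \<Rightarrow> 'o \<Rightarrow> 'o \<Rightarrow> 'm \<Rightarrow> 'm \<Rightarrow> 'm \<Rightarrow> 'm \<Rightarrow> bool" where
  "biprod C X Y P p1 p2 i1 i2 \<longleftrightarrow>
     X \<in> Obj C \<and> Y \<in> Obj C \<and> P \<in> Obj C \<and>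
     p1 \<in> hom C P X \<and> p2 \<in> hom C P Y \<and> i1 \<in> hom C X P \<and> i2 \<in> hom C Y P \<and>
     cmp C p1 i1 = idm C X \<and> cmp C p2 i2 = idm C Y \<and>
     madd C (cmp C i1 p1) (cmp C i2 p2) = idm C P"

definition additive :: "('o, 'm, 'x) tricat_scheme \<Rightarrow> bool" where
  "additive C \<longleftrightarrow> preadditive C \<and> (\<exists>Z. zero_obj C Z) \<and>
     (\<forall>X\<in>Obj C. \<forall>Y\<in>Obj C. \<exists>P p1 p2 i1 i2. biprod C X Y P p1 p2 i1 i2)"

definition shift_auto :: "('o, 'm, 'x) tricat_scheme \<Rightarrow> bool" where
  "shift_auto C \<longleftrightarrow>
     (\<forall>X\<in>Obj C. shO C X \<in> Obj C \<and> ushO C X \<in> Obj C \<and>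
        ushO C (shO C X) = X \<and> shO C (ushO C X) = X) \<and>
     (\<forall>X Y f. f \<in> hom C X Y \<longrightarrow> shM C f \<in> hom C (shO C X) (shO C Y) \<and>
        ushM C f \<in> hom C (ushO C X) (ushO C Y)) \<and>
     (\<forall>f\<in>Mor C. ushM C (shM C f) = f \<and> shM C (ushM C f) = f) \<and>
     (\<forall>X Y Z f g. f \<in> hom C X Y \<longrightarrow> g \<in> hom C Y Z \<longrightarrow>
        shM C (cmp C g f) = cmp C (shM C g) (shM C f)) \<and>
     (\<forall>X\<in>Obj C. shM C (idm C X) = idm C (shO C X)) \<and>
     (\<forall>X Y f g. f \<in> hom C X Y \<longrightarrow> g \<in> hom C X Y \<longrightarrow>
        shM C (madd C f g) = madd C (shM C f) (shM C g))"

definition triangle :: "('o, 'm, 'x) tricat_scheme \<Rightarrow> 'o \<times> 'o \<times> 'o \<times> 'm \<times> 'm \<times> 'm \<Rightarrow> bool" where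
  "triangle C t \<longleftrightarrow> (case t of (X, Y, Z, f, g, h) \<Rightarrow>
     f \<in> hom C X Y \<and> g \<in> hom C Y Z \<and> h \<in> hom C Z (shO C X))"

definition tri_mor :: "('o, 'm, 'x) tricat_scheme \<Rightarrow> 'o \<times> 'o \<times> 'o \<times> 'm \<times> 'm \<times> 'm \<Rightarrow>
    'o \<times> 'o \<times> 'o \<times> 'm \<times> 'm \<times> 'm \<Rightarrow> 'm \<Rightarrow> 'm \<Rightarrow> 'm \<Rightarrow> bool" where
  "tri_mor C t t' a b c \<longleftrightarrow> (case t of (X, Y, Z, f, g, h) \<Rightarrow> case t' of (X', Y', Z', f', g', h') \<Rightarrow>
     a \<in> hom C X X' \<and> b \<in> hom C Y Y' \<and> c \<in> hom C Z Z' \<and>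
     cmp C b f = cmp C f' a \<and> cmp C c g = cmp C g' b \<and> cmp C (shM C a) h = cmp C h' c)"

definition triangulated :: "('o, 'm, 'x) tricat_scheme \<Rightarrow> bool" where
  "triangulated C \<longleftrightarrow> additive C \<and> shift_auto C \<and>
     \<comment> \<open>distinguished triangles are triangles, closed under isomorphism\<close>
     (\<forall>t\<in>dist C. triangle C t) \<and>
     (\<forall>t t' a b c. t \<in> dist C \<longrightarrow> triangle C t' \<longrightarrow> tri_mor C t t' a b c \<longrightarrow>
        iso C a \<longrightarrow> iso C b \<longrightarrow> iso C c \<longrightarrow> t' \<in> dist C) \<and>
     \<comment> \<open>TR1\<close>
     (\<forall>X\<in>Obj C. \<forall>Z. zero_obj C Z \<longrightarrow>
        (X, X, Z, idm C X, mzero C X Z, mzero C Z (shO C X)) \<in> dist C) \<and>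
     (\<forall>X Y f. X \<in> Obj C \<longrightarrow> Y \<in> Obj C \<longrightarrow> f \<in> hom C X Y \<longrightarrow>
        (\<exists>Z g h. (X, Y, Z, f, g, h) \<in> dist C)) \<and>
     \<comment> \<open>TR2 (rotation)\<close>
     (\<forall>X Y Z f g h. (X, Y, Z, f, g, h) \<in> dist C \<longleftrightarrow>
        (Y, Z, shO C X, g, h, mneg C (shM C f)) \<in> dist C) \<and>
     \<comment> \<open>TR3 (completion of morphisms)\<close>
     (\<forall>X Y Z f g h X' Y' Z' f' g' h' a b.
        (X, Y, Z, f, g, h) \<in> dist C \<longrightarrow> (X', Y', Z', f', g', h') \<in> dist C \<longrightarrow>
        a \<in> hom C X X' \<longrightarrow> b \<in> hom C Y Y' \<longrightarrow> cmp C b f = cmp C f' a \<longrightarrow>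
        (\<exists>c. tri_mor C (X, Y, Z, f, g, h) (X', Y', Z', f', g', h') a b c)) \<and>
     \<comment> \<open>TR4 (octahedral axiom)\<close>
     (\<forall>X Y Z Z' X' Y' f g h1 j1 h2 j2 h3 j3.
        (X, Y, Z', f, h1, j1) \<in> dist C \<longrightarrow>
        (Y, Z, X', g, h2, j2) \<in> dist C \<longrightarrow>
        (X, Z, Y', cmp C g f, h3, j3) \<in> dist C \<longrightarrow>
        (\<exists>u v. (Z', Y', X', u, v, cmp C (shM C h1) j2) \<in> dist C \<and>
           cmp C u h1 = cmp C h3 g \<and> cmp C j3 u = j1 \<and>
           cmp C v h3 = h2 \<and> cmp C j2 v = cmp C (shM C f) j3))"

definition good_subcat :: "('o, 'm, 'x) tricat_scheme \<Rightarrow> 'o set \<Rightarrow> bool" where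
  "good_subcat C A \<longleftrightarrow> A \<subseteq> Obj C \<and>
     (\<forall>X Y f. X \<in> A \<longrightarrow> f \<in> hom C X Y \<longrightarrow> iso C f \<longrightarrow> Y \<in> A) \<and>
     (\<forall>Z. zero_obj C Z \<longrightarrow> Z \<in> A) \<and>
     (\<forall>X Y P p1 p2 i1 i2. biprod C X Y P p1 p2 i1 i2 \<longrightarrow>
        ((X \<in> A \<and> Y \<in> A) \<longleftrightarrow> P \<in> A))"

text \<open>X * Y: objects C admitting a distinguished triangle X0 -> C -> Y0 -> X0[1].\<close>
definition ext :: "('o, 'm, 'x) tricat_scheme \<Rightarrow> 'o set \<Rightarrow> 'o set \<Rightarrow> 'o set" where
  "ext C A B = {M \<in> Obj C. \<exists>X\<in>A. \<exists>Y\<in>B. \<exists>f g h. (X, M, Y, f, g, h) \<in> dist C}"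

definition shift_set :: "('o, 'm, 'x) tricat_scheme \<Rightarrow> 'o set \<Rightarrow> 'o set" where
  "shift_set C A = shO C ` A"

definition unshift_set :: "('o, 'm, 'x) tricat_scheme \<Rightarrow> 'o set \<Rightarrow> 'o set" where
  "unshift_set C A = ushO C ` A"

definition hom_vanish :: "('o, 'm, 'x) tricat_scheme \<Rightarrow> 'o set \<Rightarrow> 'o set \<Rightarrow> bool" where
  "hom_vanish C A B \<longleftrightarrow> (\<forall>X\<in>A. \<forall>Y\<in>B. hom C X Y = {mzero C X Y})"

definition cotorsion_pair :: "('o, 'm, 'x) tricat_scheme \<Rightarrow> 'o set \<Rightarrow> 'o set \<Rightarrow> bool" where
  "cotorsion_pair C A B \<longleftrightarrow> good_subcat C A \<and> good_subcat C B \<and>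
     Obj C = ext C A (shift_set C B) \<and> hom_vanish C A (shift_set C B)"

definition twin_cotorsion_pair ::
  "('o, 'm, 'x) tricat_scheme \<Rightarrow> 'o set \<Rightarrow> 'o set \<Rightarrow> 'o set \<Rightarrow> 'o set \<Rightarrow> bool" where
  "twin_cotorsion_pair C S T U V \<longleftrightarrow> cotorsion_pair C S T \<and> cotorsion_pair C U V \<and>
     hom_vanish C S (shift_set C V)"

end

theory Submission
  imports Defs
begin

locale tri =
  fixes C :: "('o, 'm, 'x) tricat_scheme"
  assumes tri: "triangulated C"
begin

lemmas tri_ax = tri[unfolded triangulated_def]
lemma addC: "additive C" using tri_ax by (rule conjunct1)
lemma sa: "shift_auto C" using tri_ax[THEN conjunct2] by (rule conjunct1)
lemma tri_tr: "\<forall>t\<in>dist C. triangle C t" using tri_ax[THEN conjunct2, THEN conjunct2] by (rule conjunct1)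
lemma tri_TR1: "\<forall>X\<in>Obj C. \<forall>Z. zero_obj C Z \<longrightarrow>
        (X, X, Z, idm C X, mzero C X Z, mzero C Z (shO C X)) \<in> dist C"
  using tri_ax[THEN conjunct2, THEN conjunct2, THEN conjunct2, THEN conjunct2] by (rule conjunct1)
lemma tri_TR2: "\<forall>X Y Z f g h. (X, Y, Z, f, g, h) \<in> dist C \<longleftrightarrow>
        (Y, Z, shO C X, g, h, mneg C (shM C f)) \<in> dist C"
  using tri_ax[THEN conjunct2, THEN conjunct2, THEN conjunct2, THEN conjunct2,
     THEN conjunct2, THEN conjunct2] by (rule conjunct1)
lemma tri_TR3: "\<forall>X Y Z f g h X' Y' Z' f' g' h' a b.
        (X, Y, Z, f, g, h) \<in> dist C \<longrightarrow> (X', Y', Z', f', g', h') \<in> dist C \<longrightarrow>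
        a \<in> hom C X X' \<longrightarrow> b \<in> hom C Y Y' \<longrightarrow> cmp C b f = cmp C f' a \<longrightarrow>
        (\<exists>c. tri_mor C (X, Y, Z, f, g, h) (X', Y', Z', f', g', h') a b c)"
  using tri_ax[THEN conjunct2, THEN conjunct2, THEN conjunct2, THEN conjunct2,
     THEN conjunct2, THEN conjunct2, THEN conjunct2] by (rule conjunct1)

lemmas add_ax = addC[unfolded additive_def]
lemma pre: "preadditive C" using add_ax by (rule conjunct1)
lemma zex: "\<exists>Z. zero_obj C Z" using add_ax[THEN conjunct2] by (rule conjunct1)
lemmas pre_ax = pre[unfolded preadditive_def]
lemma cat: "category C" using pre_ax by (rule conjunct1)
lemma pre_obj: "\<forall>X\<in>Obj C. \<forall>Y\<in>Obj C.
        mzero C X Y \<in> hom C X Y \<and>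
        (\<forall>f\<in>hom C X Y. \<forall>g\<in>hom C X Y. madd C f g \<in> hom C X Y) \<and>
        (\<forall>f\<in>hom C X Y. mneg C f \<in> hom C X Y) \<and>
        (\<forall>f\<in>hom C X Y. \<forall>g\<in>hom C X Y. \<forall>h\<in>hom C X Y.
            madd C (madd C f g) h = madd C f (madd C g h)) \<and>
        (\<forall>f\<in>hom C X Y. \<forall>g\<in>hom C X Y. madd C f g = madd C g f) \<and>
        (\<forall>f\<in>hom C X Y. madd C (mzero C X Y) f = f) \<and>
        (\<forall>f\<in>hom C X Y. madd C f (mneg C f) = mzero C X Y)"
  using pre_ax[THEN conjunct2] by (rule conjunct1)
lemma distr_l: "f \<in> hom C X Y \<Longrightarrow> g \<in> hom C Y Z \<Longrightarrow> g' \<in> hom C Y Z \<Longrightarrow>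
        cmp C (madd C g g') f = madd C (cmp C g f) (cmp C g' f)"
  using pre_ax[THEN conjunct2, THEN conjunct2, THEN conjunct1, rule_format] by blast
lemma distr_r: "f \<in> hom C X Y \<Longrightarrow> f' \<in> hom C X Y \<Longrightarrow> g \<in> hom C Y Z \<Longrightarrow>
        cmp C g (madd C f f') = madd C (cmp C g f) (cmp C g f')"
  using pre_ax[THEN conjunct2, THEN conjunct2, THEN conjunct2, rule_format] by blast

lemmas cat_ax = cat[unfolded category_def]
lemma homD: "f \<in> hom C X Y \<Longrightarrow> f \<in> Mor C" by (simp add: hom_def)
lemma hom_obj: assumes "f \<in> hom C X Y" shows "X \<in> Obj C" "Y \<in> Obj C"
proof -
  have "f \<in> Mor C" "dom C f = X" "cod C f = Y" using assms by (auto simp: hom_def)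
  then show "X \<in> Obj C" "Y \<in> Obj C" using cat_ax[THEN conjunct1] by auto
qed
lemma id_hom: "X \<in> Obj C \<Longrightarrow> idm C X \<in> hom C X X"
  using cat_ax[THEN conjunct2, THEN conjunct1] by blast
lemma cmp_hom: "f \<in> hom C X Y \<Longrightarrow> g \<in> hom C Y Z \<Longrightarrow> cmp C g f \<in> hom C X Z"
  using cat_ax[THEN conjunct2, THEN conjunct2, THEN conjunct1, rule_format] by blast
lemma assoc: "f \<in> hom C W X \<Longrightarrow> g \<in> hom C X Y \<Longrightarrow> h \<in> hom C Y Z \<Longrightarrow>
   cmp C h (cmp C g f) = cmp C (cmp C h g) f"
  using cat_ax[THEN conjunct2, THEN conjunct2, THEN conjunct2, THEN conjunct1, rule_format] by blast
lemma id_r: "f \<in> hom C X Y \<Longrightarrow> cmp C f (idm C X) = f"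
  using cat_ax[THEN conjunct2, THEN conjunct2, THEN conjunct2, THEN conjunct2, rule_format] by blast
lemma id_l: "f \<in> hom C X Y \<Longrightarrow> cmp C (idm C Y) f = f"
  using cat_ax[THEN conjunct2, THEN conjunct2, THEN conjunct2, THEN conjunct2, rule_format] by blast

lemma preo: assumes "f \<in> hom C X Y" shows
   "mzero C X Y \<in> hom C X Y \<and>
        (\<forall>f\<in>hom C X Y. \<forall>g\<in>hom C X Y. madd C f g \<in> hom C X Y) \<and>
        (\<forall>f\<in>hom C X Y. mneg C f \<in> hom C X Y) \<and>
        (\<forall>f\<in>hom C X Y. \<forall>g\<in>hom C X Y. \<forall>h\<in>hom C X Y.
            madd C (madd C f g) h = madd C f (madd C g h)) \<and>
        (\<forall>f\<in>hom C X Y. \<forall>g\<in>hom C X Y. madd C f g = madd C g f) \<and>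
        (\<forall>f\<in>hom C X Y. madd C (mzero C X Y) f = f) \<and>
        (\<forall>f\<in>hom C X Y. madd C f (mneg C f) = mzero C X Y)"
  using pre_obj hom_obj[OF assms] by blast

lemma zero_hom: "X \<in> Obj C \<Longrightarrow> Y \<in> Obj C \<Longrightarrow> mzero C X Y \<in> hom C X Y"
  using pre_obj by blast
lemma add_hom: assumes "f \<in> hom C X Y" "g \<in> hom C X Y" shows "madd C f g \<in> hom C X Y"
  using preo[OF assms(1)] assms by blast
lemma neg_hom: assumes "f \<in> hom C X Y" shows "mneg C f \<in> hom C X Y"
  using preo[OF assms(1)] assms by blast
lemma add_assoc: assumes "f \<in> hom C X Y" "g \<in> hom C X Y" "h \<in> hom C X Y"
  shows "madd C (madd C f g) h = madd C f (madd C g h)"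
  using preo[OF assms(1)] assms by blast
lemma add_comm: assumes "f \<in> hom C X Y" "g \<in> hom C X Y" shows "madd C f g = madd C g f"
  using preo[OF assms(1)] assms by blast
lemma zero_add: assumes "f \<in> hom C X Y" shows "madd C (mzero C X Y) f = f"
  using preo[OF assms(1)] assms by blast
lemma add_neg: assumes "f \<in> hom C X Y" shows "madd C f (mneg C f) = mzero C X Y"
  using preo[OF assms(1)] assms by blast

lemmas sa_ax = sa[unfolded shift_auto_def]
lemma shO_obj: "X \<in> Obj C \<Longrightarrow> shO C X \<in> Obj C" using sa_ax[THEN conjunct1] by blast
lemma ushO_obj: "X \<in> Obj C \<Longrightarrow> ushO C X \<in> Obj C" using sa_ax[THEN conjunct1] by blast
lemma ush_sh: "X \<in> Obj C \<Longrightarrow> ushO C (shO C X) = X" using sa_ax[THEN conjunct1] by blast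
lemma sh_ush: "X \<in> Obj C \<Longrightarrow> shO C (ushO C X) = X" using sa_ax[THEN conjunct1] by blast
lemma shM_hom: "f \<in> hom C X Y \<Longrightarrow> shM C f \<in> hom C (shO C X) (shO C Y)"
  using sa_ax[THEN conjunct2, THEN conjunct1, rule_format] by blast
lemma ushM_hom: "f \<in> hom C X Y \<Longrightarrow> ushM C f \<in> hom C (ushO C X) (ushO C Y)"
  using sa_ax[THEN conjunct2, THEN conjunct1, rule_format] by blast
lemma ushM_shM: "f \<in> Mor C \<Longrightarrow> ushM C (shM C f) = f"
  using sa_ax[THEN conjunct2, THEN conjunct2, THEN conjunct1] by blast
lemma shM_ushM: "f \<in> Mor C \<Longrightarrow> shM C (ushM C f) = f"
  using sa_ax[THEN conjunct2, THEN conjunct2, THEN conjunct1] by blast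
lemma shM_cmp: "f \<in> hom C X Y \<Longrightarrow> g \<in> hom C Y Z \<Longrightarrow> shM C (cmp C g f) = cmp C (shM C g) (shM C f)"
  using sa_ax[THEN conjunct2, THEN conjunct2, THEN conjunct2, THEN conjunct1, rule_format] by blast
lemma shM_id: "X \<in> Obj C \<Longrightarrow> shM C (idm C X) = idm C (shO C X)"
  using sa_ax[THEN conjunct2, THEN conjunct2, THEN conjunct2, THEN conjunct2, THEN conjunct1] by blast
lemma shM_add: "f \<in> hom C X Y \<Longrightarrow> g \<in> hom C X Y \<Longrightarrow> shM C (madd C f g) = madd C (shM C f) (shM C g)"
  using sa_ax[THEN conjunct2, THEN conjunct2, THEN conjunct2, THEN conjunct2, THEN conjunct2, rule_format] by blast

lemma dist_hom: assumes "(X, Y, Z, f, g, h) \<in> dist C"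
  shows "f \<in> hom C X Y" "g \<in> hom C Y Z" "h \<in> hom C Z (shO C X)"
proof -
  have "triangle C (X, Y, Z, f, g, h)" using tri_tr assms by blast
  then show "f \<in> hom C X Y" "g \<in> hom C Y Z" "h \<in> hom C Z (shO C X)"
    unfolding triangle_def by simp_all
qed
lemma TR1: "X \<in> Obj C \<Longrightarrow> zero_obj C Z \<Longrightarrow>
        (X, X, Z, idm C X, mzero C X Z, mzero C Z (shO C X)) \<in> dist C"
  using tri_TR1 by blast
lemma rot: "(X, Y, Z, f, g, h) \<in> dist C \<longleftrightarrow> (Y, Z, shO C X, g, h, mneg C (shM C f)) \<in> dist C"
  using tri_TR2 by blast
lemma TR3: assumes "(X, Y, Z, f, g, h) \<in> dist C" "(X', Y', Z', f', g', h') \<in> dist C"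
        "a \<in> hom C X X'" "b \<in> hom C Y Y'" "cmp C b f = cmp C f' a"
  shows "\<exists>c. c \<in> hom C Z Z' \<and> cmp C c g = cmp C g' b \<and> cmp C (shM C a) h = cmp C h' c"
proof -
  obtain c where "tri_mor C (X, Y, Z, f, g, h) (X', Y', Z', f', g', h') a b c"
    using tri_TR3[rule_format, OF assms] by blast
  then show ?thesis unfolding tri_mor_def by auto
qed

end
context tri begin

lemma add_zero: assumes "f \<in> hom C X Y" shows "madd C f (mzero C X Y) = f"
  using add_comm[OF assms zero_hom[OF hom_obj[OF assms]]] zero_add[OF assms] by simp

lemma cancel: assumes a: "a \<in> hom C X Y" and b: "b \<in> hom C X Y" and c: "c \<in> hom C X Y"
  and e: "madd C a b = madd C a c" shows "b = c"
proof -
  have na: "mneg C a \<in> hom C X Y" using neg_hom[OF a] .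
  have 1: "madd C (mneg C a) a = mzero C X Y" using add_comm[OF na a] add_neg[OF a] by simp
  have "b = madd C (madd C (mneg C a) a) b" using 1 zero_add[OF b] by simp
  also have "\<dots> = madd C (mneg C a) (madd C a b)" using add_assoc[OF na a b] .
  also have "\<dots> = madd C (mneg C a) (madd C a c)" using e by simp
  also have "\<dots> = madd C (madd C (mneg C a) a) c" using add_assoc[OF na a c] by simp
  also have "\<dots> = c" using 1 zero_add[OF c] by simp
  finally show ?thesis .
qed

lemma self_zero: assumes b: "b \<in> hom C X Y" and e: "madd C b b = b" shows "b = mzero C X Y"
  using cancel[OF b b zero_hom[OF hom_obj[OF b]]] e add_zero[OF b] by simp

lemma neg_unique: assumes a: "a \<in> hom C X Y" and b: "b \<in> hom C X Y"
  and e: "madd C a b = mzero C X Y" shows "b = mneg C a"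
  using cancel[OF a b neg_hom[OF a]] e add_neg[OF a] by simp

lemma neg_neg: assumes a: "a \<in> hom C X Y" shows "mneg C (mneg C a) = a"
proof -
  have na: "mneg C a \<in> hom C X Y" using neg_hom[OF a] .
  have "madd C (mneg C a) a = mzero C X Y" using add_comm[OF na a] add_neg[OF a] by simp
  then show ?thesis using neg_unique[OF na a] by simp
qed

lemma neg_zero: assumes "X \<in> Obj C" "Y \<in> Obj C" shows "mneg C (mzero C X Y) = mzero C X Y"
proof -
  have z: "mzero C X Y \<in> hom C X Y" using zero_hom assms by blast
  show ?thesis using neg_unique[OF z z] zero_add[OF z] by simp
qed

lemma cmp_zero_l: assumes f: "f \<in> hom C X Y" and Z: "Z \<in> Obj C"
  shows "cmp C (mzero C Y Z) f = mzero C X Z"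
proof -
  have z: "mzero C Y Z \<in> hom C Y Z" using zero_hom hom_obj[OF f] Z by blast
  have "cmp C (mzero C Y Z) f = cmp C (madd C (mzero C Y Z) (mzero C Y Z)) f"
    using zero_add[OF z] by simp
  also have "\<dots> = madd C (cmp C (mzero C Y Z) f) (cmp C (mzero C Y Z) f)" using distr_l[OF f z z] .
  finally show ?thesis using self_zero[OF cmp_hom[OF f z]] by simp
qed

lemma cmp_zero_r: assumes g: "g \<in> hom C Y Z" and X: "X \<in> Obj C"
  shows "cmp C g (mzero C X Y) = mzero C X Z"
proof -
  have z: "mzero C X Y \<in> hom C X Y" using zero_hom hom_obj[OF g] X by blast
  have "cmp C g (mzero C X Y) = cmp C g (madd C (mzero C X Y) (mzero C X Y))"
    using zero_add[OF z] by simp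
  also have "\<dots> = madd C (cmp C g (mzero C X Y)) (cmp C g (mzero C X Y))" using distr_r[OF z z g] .
  finally show ?thesis using self_zero[OF cmp_hom[OF z g]] by simp
qed

lemma cmp_neg_r: assumes f: "f \<in> hom C X Y" and g: "g \<in> hom C Y Z"
  shows "cmp C g (mneg C f) = mneg C (cmp C g f)"
proof -
  have "madd C (cmp C g f) (cmp C g (mneg C f)) = cmp C g (madd C f (mneg C f))"
    using distr_r[OF f neg_hom[OF f] g] by simp
  also have "\<dots> = mzero C X Z" using add_neg[OF f] cmp_zero_r[OF g] hom_obj[OF f] by simp
  finally show ?thesis using neg_unique[OF cmp_hom[OF f g] cmp_hom[OF neg_hom[OF f] g]] by simp
qed

lemma cmp_neg_l: assumes f: "f \<in> hom C X Y" and g: "g \<in> hom C Y Z"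
  shows "cmp C (mneg C g) f = mneg C (cmp C g f)"
proof -
  have "madd C (cmp C g f) (cmp C (mneg C g) f) = cmp C (madd C g (mneg C g)) f"
    using distr_l[OF f g neg_hom[OF g]] by simp
  also have "\<dots> = mzero C X Z" using add_neg[OF g] cmp_zero_l[OF f] hom_obj[OF g] by simp
  finally show ?thesis using neg_unique[OF cmp_hom[OF f g] cmp_hom[OF f neg_hom[OF g]]] by simp
qed

lemma shM_zero: assumes "X \<in> Obj C" "Y \<in> Obj C"
  shows "shM C (mzero C X Y) = mzero C (shO C X) (shO C Y)"
proof -
  have z: "mzero C X Y \<in> hom C X Y" using zero_hom assms by blast
  have "shM C (mzero C X Y) = shM C (madd C (mzero C X Y) (mzero C X Y))" using zero_add[OF z] by simp
  also have "\<dots> = madd C (shM C (mzero C X Y)) (shM C (mzero C X Y))" using shM_add[OF z z] .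
  finally show ?thesis using self_zero[OF shM_hom[OF z]] by simp
qed

lemma ushM_zero: assumes "X \<in> Obj C" "Y \<in> Obj C"
  shows "ushM C (mzero C X Y) = mzero C (ushO C X) (ushO C Y)"
proof -
  have "mzero C X Y = shM C (mzero C (ushO C X) (ushO C Y))"
    using shM_zero[OF ushO_obj ushO_obj] assms sh_ush by simp
  then show ?thesis using ushM_shM[OF homD[OF zero_hom[OF ushO_obj ushO_obj]]] assms by simp
qed

lemma shM_inj: "f \<in> Mor C \<Longrightarrow> g \<in> Mor C \<Longrightarrow> shM C f = shM C g \<Longrightarrow> f = g"
  using ushM_shM by metis

end
context tri begin

lemma zobj: "zero_obj C Z \<Longrightarrow> Z \<in> Obj C" unfolding zero_obj_def by blast

lemma comp_zero: assumes t: "(X, Y, Z, f, g, h) \<in> dist C" shows "cmp C g f = mzero C X Z"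
proof -
  obtain Z0 where z0: "zero_obj C Z0" using zex by blast
  have f: "f \<in> hom C X Y" and g: "g \<in> hom C Y Z" using dist_hom[OF t] by auto
  have X: "X \<in> Obj C" and Zo: "Z \<in> Obj C" using hom_obj f g by auto
  have Z0: "Z0 \<in> Obj C" using zobj[OF z0] .
  obtain c where c: "c \<in> hom C Z0 Z" "cmp C c (mzero C X Z0) = cmp C g f"
    using TR3[OF TR1[OF X z0] t id_hom[OF X] f] id_r[OF f] by blast
  show ?thesis using c cmp_zero_r[OF c(1) X] by simp
qed

lemma rot_back: assumes t: "(B, C', shO C A, g, h, h') \<in> dist C" and A: "A \<in> Obj C"
  shows "(A, B, C', ushM C (mneg C h'), g, h) \<in> dist C"
    and "ushM C (mneg C h') \<in> hom C A B"
proof -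
  have h': "h' \<in> hom C (shO C A) (shO C B)" using dist_hom(3)[OF t] .
  have B: "B \<in> Obj C" using hom_obj dist_hom(1)[OF t] by blast
  have n: "mneg C h' \<in> hom C (shO C A) (shO C B)" using neg_hom[OF h'] .
  show hh: "ushM C (mneg C h') \<in> hom C A B" using ushM_hom[OF n] ush_sh A B by simp
  have "shM C (ushM C (mneg C h')) = mneg C h'" using shM_ushM homD[OF n] by blast
  then have "mneg C (shM C (ushM C (mneg C h'))) = h'" using neg_neg[OF h'] by simp
  then show "(A, B, C', ushM C (mneg C h'), g, h) \<in> dist C" using rot[of A B C' "ushM C (mneg C h')" g h] t by simp
qed

lemma tri_zEE: assumes z0: "zero_obj C Z0" and E: "E \<in> Obj C"
  shows "\<exists>k. (Z0, E, E, mzero C Z0 E, mneg C (idm C E), k) \<in> dist C"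
proof -
  have uE: "ushO C E \<in> Obj C" using ushO_obj[OF E] .
  have "(ushO C E, Z0, E, mzero C (ushO C E) Z0, mzero C Z0 E, mneg C (idm C E)) \<in> dist C"
    using TR1[OF uE z0] rot shM_id[OF uE] sh_ush[OF E] by metis
  then show ?thesis using rot sh_ush[OF E] by metis
qed

lemma wcok: assumes t: "(X, Y, Z, f, g, h) \<in> dist C" and y: "y \<in> hom C Y E"
  and e: "cmp C y f = mzero C X E"
  shows "\<exists>z. z \<in> hom C Z E \<and> cmp C z g = y"
proof -
  obtain Z0 where z0: "zero_obj C Z0" using zex by blast
  have Z0: "Z0 \<in> Obj C" using zobj[OF z0] .
  have E: "E \<in> Obj C" using hom_obj y by blast
  have f: "f \<in> hom C X Y" and g: "g \<in> hom C Y Z" using dist_hom[OF t] by auto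
  have X: "X \<in> Obj C" using hom_obj f by blast
  obtain k where t2: "(Z0, E, E, mzero C Z0 E, mneg C (idm C E), k) \<in> dist C"
    using tri_zEE[OF z0 E] by blast
  have sq: "cmp C y f = cmp C (mzero C Z0 E) (mzero C X Z0)"
    using e cmp_zero_l[OF zero_hom[OF X Z0] E] by simp
  obtain c where c: "c \<in> hom C Z E" "cmp C c g = cmp C (mneg C (idm C E)) y"
    using TR3[OF t t2 zero_hom[OF X Z0] y sq] by blast
  have "cmp C c g = mneg C y" using c(2) cmp_neg_l[OF y id_hom[OF E]] id_l[OF y] by simp
  then have "cmp C (mneg C c) g = y"
    using cmp_neg_l[OF g c(1)] neg_neg[OF y] by simp
  then show ?thesis using neg_hom[OF c(1)] by blast
qed

lemma wker: assumes t: "(X, Y, Z, f, g, h) \<in> dist C" and x: "x \<in> hom C D Y"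
  and e: "cmp C g x = mzero C D Z"
  shows "\<exists>w. w \<in> hom C D X \<and> cmp C f w = x"
proof -
  obtain Z0 where z0: "zero_obj C Z0" using zex by blast
  have Z0: "Z0 \<in> Obj C" using zobj[OF z0] .
  have D: "D \<in> Obj C" using hom_obj x by blast
  have f: "f \<in> hom C X Y" and g: "g \<in> hom C Y Z" using dist_hom[OF t] by auto
  have X: "X \<in> Obj C" and Zo: "Z \<in> Obj C" using hom_obj f g by auto
  have s: "(D, Z0, shO C D, mzero C D Z0, mzero C Z0 (shO C D), mneg C (idm C (shO C D))) \<in> dist C"
    using TR1[OF D z0] rot shM_id[OF D] by metis
  have t': "(Y, Z, shO C X, g, h, mneg C (shM C f)) \<in> dist C" using t rot by blast
  have sq: "cmp C (mzero C Z0 Z) (mzero C D Z0) = cmp C g x"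
    using e cmp_zero_l[OF zero_hom[OF D Z0] Zo] by simp
  obtain c where c: "c \<in> hom C (shO C D) (shO C X)"
     "cmp C (shM C x) (mneg C (idm C (shO C D))) = cmp C (mneg C (shM C f)) c"
    using TR3[OF s t' x zero_hom[OF Z0 Zo] sq] by blast
  have sx: "shM C x \<in> hom C (shO C D) (shO C Y)" using shM_hom[OF x] .
  have sf: "shM C f \<in> hom C (shO C X) (shO C Y)" using shM_hom[OF f] .
  have "mneg C (shM C x) = mneg C (cmp C (shM C f) c)"
    using c(2) cmp_neg_r[OF id_hom[OF shO_obj[OF D]] sx] id_r[OF sx] cmp_neg_l[OF c(1) sf] by simp
  then have eq: "shM C x = cmp C (shM C f) c"
    using neg_neg[OF sx] neg_neg[OF cmp_hom[OF c(1) sf]] by metis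
  have w: "ushM C c \<in> hom C D X" using ushM_hom[OF c(1)] ush_sh D X by simp
  have "shM C (cmp C f (ushM C c)) = shM C x"
    using shM_cmp[OF w f] shM_ushM[OF homD[OF c(1)]] eq by simp
  then have "cmp C f (ushM C c) = x"
    using shM_inj[OF homD[OF cmp_hom[OF w f]] homD[OF x]] by simp
  then show ?thesis using w by blast
qed

end
context tri begin

lemma split: assumes t: "(D, A, B, k, p, q) \<in> dist C" and q0: "q = mzero C B (shO C D)"
  shows "\<exists>p2 s. biprod C B D A p p2 s k"
proof -
  have k: "k \<in> hom C D A" and p: "p \<in> hom C A B" and q: "q \<in> hom C B (shO C D)"
    using dist_hom[OF t] by auto
  have D: "D \<in> Obj C" and A: "A \<in> Obj C" and B: "B \<in> Obj C" using hom_obj k p by auto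
  have t1: "(A, B, shO C D, p, q, mneg C (shM C k)) \<in> dist C" using t rot by blast
  obtain s where s: "s \<in> hom C B A" "cmp C p s = idm C B"
    using wker[OF t1 id_hom[OF B]] id_r[OF q] q0 by auto
  define sp where "sp = cmp C s p"
  have sp: "sp \<in> hom C A A" unfolding sp_def using cmp_hom[OF p s(1)] .
  define e where "e = madd C (idm C A) (mneg C sp)"
  have nsp: "mneg C sp \<in> hom C A A" using neg_hom[OF sp] .
  have e: "e \<in> hom C A A" unfolding e_def using add_hom[OF id_hom[OF A] nsp] .
  have psp: "cmp C p sp = p" unfolding sp_def using assoc[OF p s(1) p] s(2) id_l[OF p] by simp
  have "cmp C p e = madd C p (mneg C p)"
    unfolding e_def using distr_r[OF id_hom[OF A] nsp p] id_r[OF p] cmp_neg_r[OF sp p] psp by simp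
  then have pe: "cmp C p e = mzero C A B" using add_neg[OF p] by simp
  obtain p2 where p2: "p2 \<in> hom C A D" "cmp C k p2 = e" using wker[OF t e pe] by blast
  have pk: "cmp C p k = mzero C D B" using comp_zero[OF t] .
  have spk: "cmp C sp k = mzero C D A"
    unfolding sp_def using assoc[OF k p s(1)] pk cmp_zero_r[OF s(1) D] by simp
  have ek: "cmp C e k = k"
    unfolding e_def using distr_l[OF k id_hom[OF A] nsp] id_l[OF k] cmp_neg_l[OF k sp] spk
      neg_zero[OF D A] add_zero[OF k] by simp
  have kpk: "cmp C k (cmp C p2 k) = k" using assoc[OF k p2(1) k] p2(2) ek by simp
  have p2k: "cmp C p2 k \<in> hom C D D" using cmp_hom[OF k p2(1)] .
  define d where "d = madd C (cmp C p2 k) (mneg C (idm C D))"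
  have nid: "mneg C (idm C D) \<in> hom C D D" using neg_hom[OF id_hom[OF D]] .
  have d: "d \<in> hom C D D" unfolding d_def using add_hom[OF p2k nid] .
  have kd: "cmp C k d = mzero C D A"
    unfolding d_def using distr_r[OF p2k nid k] kpk cmp_neg_r[OF id_hom[OF D] k] id_r[OF k] add_neg[OF k]
    by simp
  have t3: "(D, A, shO C (ushO C B), k, p, q) \<in> dist C" using t sh_ush[OF B] by simp
  have t4: "(ushO C B, D, A, ushM C (mneg C q), k, p) \<in> dist C" using rot_back(1)[OF t3 ushO_obj[OF B]] .
  have m0: "ushM C (mneg C q) = mzero C (ushO C B) D"
    using q0 neg_zero[OF B shO_obj[OF D]] ushM_zero[OF B shO_obj[OF D]] ush_sh[OF D] by simp
  obtain w where w: "w \<in> hom C D (ushO C B)" "cmp C (ushM C (mneg C q)) w = d"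
    using wker[OF t4 d kd] by blast
  have "d = mzero C D D" using w m0 cmp_zero_l[OF w(1) D] by simp
  then have "mneg C (idm C D) = mneg C (cmp C p2 k)" using neg_unique[OF p2k nid] d_def by simp
  then have p2k1: "cmp C p2 k = idm C D" using neg_neg[OF p2k] neg_neg[OF id_hom[OF D]] by metis
  have "madd C sp e = madd C sp (madd C (mneg C sp) (idm C A))"
    unfolding e_def using add_comm[OF id_hom[OF A] nsp] by simp
  also have "\<dots> = madd C (madd C sp (mneg C sp)) (idm C A)" using add_assoc[OF sp nsp id_hom[OF A]] by simp
  also have "\<dots> = idm C A" using add_neg[OF sp] zero_add[OF id_hom[OF A]] by simp
  finally have sum: "madd C (cmp C s p) (cmp C k p2) = idm C A" using sp_def p2(2) by simp
  have "biprod C B D A p p2 s k"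
    unfolding biprod_def using B D A p p2(1) s k p2k1 sum by blast
  then show ?thesis by blast
qed

end
context tri begin

lemma vanish_sh: assumes hv: "hom_vanish C S (shift_set C T)" and SO: "S \<subseteq> Obj C" and TO: "T \<subseteq> Obj C"
  and S0: "S0 \<in> S" and T0: "T0 \<in> T" and al: "\<alpha> \<in> hom C (ushO C S0) T0"
  shows "\<alpha> = mzero C (ushO C S0) T0"
proof -
  have s0: "S0 \<in> Obj C" and t0: "T0 \<in> Obj C" using SO TO S0 T0 by auto
  have "shM C \<alpha> \<in> hom C S0 (shO C T0)" using shM_hom[OF al] sh_ush[OF s0] by simp
  moreover have "hom C S0 (shO C T0) = {mzero C S0 (shO C T0)}"
    using hv S0 T0 unfolding hom_vanish_def shift_set_def by blast
  ultimately have "shM C \<alpha> = shM C (mzero C (ushO C S0) T0)"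
    using shM_zero[OF ushO_obj[OF s0] t0] sh_ush[OF s0] by simp
  then show ?thesis using shM_inj[OF homD[OF al] homD[OF zero_hom[OF ushO_obj[OF s0] t0]]] by blast
qed

lemma vanish: assumes hv: "hom_vanish C A B" and "X \<in> A" "Y \<in> B" "f \<in> hom C X Y"
  shows "f = mzero C X Y" using assms unfolding hom_vanish_def by blast

lemma main: assumes tw: "twin_cotorsion_pair C S T U V"
  shows "(ext C (U \<inter> T) (shift_set C V) \<inter> ext C (unshift_set C S) (U \<inter> T)) \<inter> ext C U T = U \<inter> T"
proof -
  have gS: "good_subcat C S" and gT: "good_subcat C T" and oST: "Obj C = ext C S (shift_set C T)"
    and hST: "hom_vanish C S (shift_set C T)"
    and gU: "good_subcat C U" and gV: "good_subcat C V" and oUV: "Obj C = ext C U (shift_set C V)"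
    and hUV: "hom_vanish C U (shift_set C V)"
    using tw unfolding twin_cotorsion_pair_def cotorsion_pair_def by auto
  have SO: "S \<subseteq> Obj C" and TO: "T \<subseteq> Obj C" and UO: "U \<subseteq> Obj C" and VO: "V \<subseteq> Obj C"
    using gS gT gU gV unfolding good_subcat_def by auto
  show ?thesis
  proof
    show "(ext C (U \<inter> T) (shift_set C V) \<inter> ext C (unshift_set C S) (U \<inter> T)) \<inter> ext C U T \<subseteq> U \<inter> T"
    proof
      fix X assume XH: "X \<in> (ext C (U \<inter> T) (shift_set C V) \<inter> ext C (unshift_set C S) (U \<inter> T)) \<inter> ext C U T"
      have X: "X \<in> Obj C" using XH unfolding ext_def by blast
      obtain W0 V0 w v r0 where W0: "W0 \<in> U \<inter> T" and V0: "V0 \<in> V"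
        and tp: "(W0, X, shO C V0, w, v, r0) \<in> dist C"
        using XH unfolding ext_def shift_set_def by blast
      obtain S0 W1 a b c0 where S0: "S0 \<in> S" and W1: "W1 \<in> U \<inter> T"
        and tm: "(ushO C S0, X, W1, a, b, c0) \<in> dist C"
        using XH unfolding ext_def unshift_set_def by blast
      obtain U0 T0 u t h0 where U0: "U0 \<in> U" and T0: "T0 \<in> T"
        and tut: "(U0, X, T0, u, t, h0) \<in> dist C"
        using XH unfolding ext_def by blast
      have u: "u \<in> hom C U0 X" and t: "t \<in> hom C X T0" using dist_hom[OF tut] by auto
      have a: "a \<in> hom C (ushO C S0) X" and b: "b \<in> hom C X W1" using dist_hom[OF tm] by auto
      have w: "w \<in> hom C W0 X" and v: "v \<in> hom C X (shO C V0)" using dist_hom[OF tp] by auto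
      have ta0: "cmp C t a = mzero C (ushO C S0) T0"
        using vanish_sh[OF hST SO TO S0 T0 cmp_hom[OF a t]] .
      obtain \<tau> where tau: "\<tau> \<in> hom C W1 T0" "cmp C \<tau> b = t" using wcok[OF tm t ta0] by blast
      have XU: "X \<in> U"
      proof -
        obtain U' Y p q r where U': "U' \<in> U" and Y: "Y \<in> shift_set C V"
          and t1: "(U', X, Y, p, q, r) \<in> dist C"
          using X oUV unfolding ext_def by blast
        obtain V' where V': "V' \<in> V" and YV: "Y = shO C V'" using Y unfolding shift_set_def by blast
        have Vo: "V' \<in> Obj C" using VO V' by auto
        have q: "q \<in> hom C X (shO C V')" using dist_hom(2)[OF t1] YV by simp
        have fu: "cmp C q u = mzero C U0 (shO C V')"
          using vanish[OF hUV U0 _ cmp_hom[OF u q]] V' unfolding shift_set_def by blast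
        obtain g where g: "g \<in> hom C T0 (shO C V')" "cmp C g t = q" using wcok[OF tut q fu] by blast
        have gt0: "cmp C g \<tau> = mzero C W1 (shO C V')"
          using vanish[OF hUV _ _ cmp_hom[OF tau(1) g(1)]] W1 V' unfolding shift_set_def by blast
        have "q = cmp C (cmp C g \<tau>) b" using assoc[OF b tau(1) g(1)] tau(2) g(2) by simp
        then have q0: "q = mzero C X (shO C V')" using gt0 cmp_zero_l[OF b shO_obj[OF Vo]] by simp
        have t2: "(V', U', X, ushM C (mneg C r), p, q) \<in> dist C"
          using rot_back(1)[of U' X V' p q r] t1 YV Vo by simp
        obtain p2 s where "biprod C X V' U' p p2 s (ushM C (mneg C r))" using split[OF t2 q0] by blast
        then show ?thesis using gU U' unfolding good_subcat_def by blast
      qed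
      have XT: "X \<in> T"
      proof -
        obtain S' Y f g h where S': "S' \<in> S" and Y: "Y \<in> shift_set C T"
          and t1: "(S', shO C X, Y, f, g, h) \<in> dist C"
          using shO_obj[OF X] oST unfolding ext_def by blast
        obtain T' where T': "T' \<in> T" and YT: "Y = shO C T'" using Y unfolding shift_set_def by blast
        have To: "T' \<in> Obj C" and So: "S' \<in> Obj C" using TO T' SO S' by auto
        have t2: "(T', S', shO C X, ushM C (mneg C h), f, g) \<in> dist C"
          using rot_back(1)[of S' "shO C X" T' f g h] t1 YT To by simp
        have t3: "(X, T', S', ushM C (mneg C g), ushM C (mneg C h), f) \<in> dist C"
          using rot_back(1)[OF t2 X] .
        have f: "f \<in> hom C S' (shO C X)" using dist_hom(1)[OF t1] .
        define \<alpha> where "\<alpha> = ushM C f"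
        have al: "\<alpha> \<in> hom C (ushO C S') X" unfolding \<alpha>_def using ushM_hom[OF f] ush_sh[OF X] by simp
        have ta: "cmp C t \<alpha> = mzero C (ushO C S') T0"
          using vanish_sh[OF hST SO TO S' T0 cmp_hom[OF al t]] .
        obtain \<beta> where be: "\<beta> \<in> hom C (ushO C S') U0" "cmp C u \<beta> = \<alpha>" using wker[OF tut al ta] by blast
        have vu: "cmp C v u = mzero C U0 (shO C V0)"
          using vanish[OF hUV U0 _ cmp_hom[OF u v]] V0 unfolding shift_set_def by blast
        have va: "cmp C v \<alpha> = mzero C (ushO C S') (shO C V0)"
          using be(2) assoc[OF be(1) u v] vu cmp_zero_l[OF be(1)] hom_obj(2)[OF v] by simp
        obtain \<gamma> where ga: "\<gamma> \<in> hom C (ushO C S') W0" "cmp C w \<gamma> = \<alpha>" using wker[OF tp al va] by blast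
        have "\<gamma> = mzero C (ushO C S') W0" using vanish_sh[OF hST SO TO S' _ ga(1)] W0 by blast
        then have a0: "\<alpha> = mzero C (ushO C S') X"
          using ga(2) cmp_zero_r[OF w ushO_obj[OF So]] by simp
        have "f = shM C \<alpha>" unfolding \<alpha>_def using shM_ushM[OF homD[OF f]] by simp
        then have f0: "f = mzero C S' (shO C X)"
          using a0 shM_zero[OF ushO_obj[OF So] X] sh_ush[OF So] by simp
        obtain p2 s where "biprod C S' X T' (ushM C (mneg C h)) p2 s (ushM C (mneg C g))"
          using split[OF t3 f0] by blast
        then show ?thesis using gT T' unfolding good_subcat_def by blast
      qed
      show "X \<in> U \<inter> T" using XU XT by blast
    qed
  next
    show "U \<inter> T \<subseteq> (ext C (U \<inter> T) (shift_set C V) \<inter> ext C (unshift_set C S) (U \<inter> T)) \<inter> ext C U T"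
    proof
      fix X assume XW: "X \<in> U \<inter> T"
      have X: "X \<in> Obj C" using XW UO by auto
      obtain Z where z: "zero_obj C Z" using zex by blast
      have Zo: "Z \<in> Obj C" using zobj[OF z] .
      have ZS: "Z \<in> S" and ZT: "Z \<in> T" and ZV: "Z \<in> V"
        using z gS gT gV unfolding good_subcat_def by simp_all
      have t0: "(X, X, Z, idm C X, mzero C X Z, mzero C Z (shO C X)) \<in> dist C" using TR1[OF X z] .
      have e1: "X \<in> ext C U T" unfolding ext_def using X XW ZT t0 by blast
      have t1: "(X, X, shO C (ushO C Z), idm C X, mzero C X Z, mzero C Z (shO C X)) \<in> dist C"
        using t0 sh_ush[OF Zo] by simp
      have t2: "(ushO C Z, X, X, ushM C (mneg C (mzero C Z (shO C X))), idm C X, mzero C X Z) \<in> dist C"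
        using rot_back(1)[OF t1 ushO_obj[OF Zo]] .
      have e2: "X \<in> ext C (unshift_set C S) (U \<inter> T)"
        unfolding ext_def unshift_set_def using X XW ZS t2 by blast
      obtain k where t3: "(Z, X, X, mzero C Z X, mneg C (idm C X), k) \<in> dist C" using tri_zEE[OF z X] by blast
      have t4: "(X, X, shO C Z, mneg C (idm C X), k, mneg C (shM C (mzero C Z X))) \<in> dist C"
        using t3 rot by blast
      have e3: "X \<in> ext C (U \<inter> T) (shift_set C V)"
        unfolding ext_def shift_set_def using X XW ZV t4 by blast
      show "X \<in> (ext C (U \<inter> T) (shift_set C V) \<inter> ext C (unshift_set C S) (U \<inter> T)) \<inter> ext C U T"
        using e1 e2 e3 by blast
    qed
  qed
qed

end

theorem lemma2p6:
  fixes C :: "('o, 'm) tricat" and S T U V :: "'o set"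
  assumes "triangulated C"
    and "twin_cotorsion_pair C S T U V"
  shows "let W = U \<inter> T;
             Cplus = ext C W (shift_set C V);
             Cminus = ext C (unshift_set C S) W;
             H = Cplus \<inter> Cminus
         in H \<inter> ext C U T = W"
  using tri.main[OF tri.intro[OF assms(1)] assms(2)] unfolding Let_def by simp

end
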